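(* Let $(\mathcal A,r)$ be a population game, $\mathcal G=(\mathcal H,\boldsymbol\eta,W)$ an undirected connected community network, and $\mathbf f$ an imitation mechanism satisfying Assumption 1. Let $\mathbf x(t)$ be the solution of the network imitation dynamics with initial condition $\mathbf x(0)\in\mathcal X^\bullet$ and $\mathbf y(t)=\mathbf x(t)\mathbf 1$. Then (i) $\mathbf y(t)=\mathbf y(0)$ for all $t\ge0$; (ii) $\mathbf x(t)\in\mathcal X^\bullet$ for all $t\ge 0$.
   Context: Let $\mathcal A$ be a finite set of actions and $\mathcal Y=\{\mathbf y\in\mathbb R_+^{\mathcal A}:\mathbf 1^\top\mathbf y=1\}$. A population game $(\mathcal A,r)$ consists of reward functions $r_i:\mathcal Y\to\mathbb R$. A community network $\mathcal G=(\mathcal H,\boldsymbol\eta,W)$: finite set $\mathcal H$, $\boldsymbol\eta\in\mathbb R^{\mathcal H}$ with $\eta_h>0$, $\sum_h\eta_h=1$, and nonnegative $W\in\mathbb R_+^{\mathcal H\times\mathcal H}$ with positive diagonal; connected means $W$ irreducible, undirected means $W=W^\top$. System states: $\mathcal X=\{\mathbf x\in\mathbb R_+^{\mathcal A\times\mathcal H}:\mathbf 1^\top\mathbf x=\boldsymbol\eta^\top\}$. An imitation mechanism is a Lipschitz map $\mathbf f:\mathcal Y\to\mathbb R_+^{\mathcal A\times\mathcal A}$. Network imitation dynamics: $$\dot x_{ih}=\sum_{j\in\mathcal A}\sum_{k\in\mathcal H}\big(x_{jh}W_{hk}x_{ik}f_{ji}(\mathbf x\mathbf 1)-x_{ih}W_{hk}x_{jk}f_{ij}(\mathbf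 x\mathbf 1)\big).$$ Assumption 1: $\operatorname{sgn}(f_{ij}(\mathbf y)-f_{ji}(\mathbf y))=\operatorname{sgn}(r_j(\mathbf y)-r_i(\mathbf y))$ for all $i,j,\mathbf y$. $\mathcal Y^\bullet=\{\mathbf y\in\mathcal Y: y_i>0,y_j>0\Rightarrow r_i(\mathbf y)=r_j(\mathbf y)\}$, $\mathcal X^\bullet=\{\mathbf x\in\mathcal X:\mathbf x\mathbf 1\in\mathcal Y^\bullet\}$. *)

theory Defs
  imports "HOL-Analysis.Analysis"
begin

text \<open>Actions: finite type 'a; communities: finite type 'h.
  Population states y :: real^'a; system states x :: real^'h^'a with x $ i $ h = x_{ih}.\<close>

definition pop_simplex :: "(real^'a::finite) set" where
  "pop_simplex = {y. (\<forall>i. 0 \<le> y $ i) \<and> (\<Sum>i\<in>UNIV. y $ i) = 1}"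

definition sys_states :: "real^'h::finite \<Rightarrow> (real^'h^'a::finite) set" where
  "sys_states eta = {x. (\<forall>i h. 0 \<le> x $ i $ h) \<and> (\<forall>h. (\<Sum>i\<in>UNIV. x $ i $ h) = eta $ h)}"

definition aggr :: "real^'h::finite^'a::finite \<Rightarrow> real^'a" where
  "aggr x = (\<chi> i. \<Sum>h\<in>UNIV. x $ i $ h)"

definition community_network :: "real^'h::finite \<Rightarrow> real^'h^'h \<Rightarrow> bool" where
  "community_network eta W \<longleftrightarrow>
     (\<forall>h. 0 < eta $ h) \<and> (\<Sum>h\<in>UNIV. eta $ h) = 1 \<and>
     (\<forall>h k. 0 \<le> W $ h $ k) \<and> (\<forall>h. 0 < W $ h $ h)"

definition irreducible_mat :: "real^'h::finite^'h \<Rightarrow> bool" where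
  "irreducible_mat W \<longleftrightarrow> (\<forall>h k. (h, k) \<in> {(a, b). W $ a $ b \<noteq> 0}\<^sup>+)"

definition undirected :: "real^'h::finite^'h \<Rightarrow> bool" where
  "undirected W \<longleftrightarrow> transpose W = W"

text \<open>Imitation mechanism: Lipschitz map from the simplex into nonnegative A x A matrices.
  f y $ i $ j = f_{ij}(y).\<close>
definition imitation_mechanism :: "(real^'a::finite \<Rightarrow> real^'a^'a) \<Rightarrow> bool" where
  "imitation_mechanism f \<longleftrightarrow>
     (\<exists>L. L-lipschitz_on pop_simplex f) \<and> (\<forall>y\<in>pop_simplex. \<forall>i j. 0 \<le> f y $ i $ j)"

definition assumption1 :: "('a::finite \<Rightarrow> real^'a \<Rightarrow> real) \<Rightarrow> (real^'a \<Rightarrow> real^'a^'a) \<Rightarrow> bool" where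
  "assumption1 r f \<longleftrightarrow>
     (\<forall>y\<in>pop_simplex. \<forall>i j. sgn (f y $ i $ j - f y $ j $ i) = sgn (r j y - r i y))"

definition Y_bullet :: "('a::finite \<Rightarrow> real^'a \<Rightarrow> real) \<Rightarrow> (real^'a) set" where
  "Y_bullet r = {y \<in> pop_simplex. \<forall>i j. 0 < y $ i \<and> 0 < y $ j \<longrightarrow> r i y = r j y}"

definition X_bullet :: "('a::finite \<Rightarrow> real^'a \<Rightarrow> real) \<Rightarrow> real^'h::finite \<Rightarrow> (real^'h^'a) set" where
  "X_bullet r eta = {x \<in> sys_states eta. aggr x \<in> Y_bullet r}"

definition net_imitation_field ::
  "real^'h::finite^'h \<Rightarrow> (real^'a::finite \<Rightarrow> real^'a^'a) \<Rightarrow> real^'h^'a \<Rightarrow> real^'h^'a" where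
  "net_imitation_field W f x = (\<chi> i h. \<Sum>j\<in>UNIV. \<Sum>k\<in>UNIV.
      x $ j $ h * W $ h $ k * x $ i $ k * f (aggr x) $ j $ i
    - x $ i $ h * W $ h $ k * x $ j $ k * f (aggr x) $ i $ j)"

end

theory Submission
  imports Defs
begin

lemma aggr_linear: "bounded_linear (aggr :: real^'h::finite^'a::finite \<Rightarrow> real^'a)"
proof -
  have "linear (aggr :: real^'h::finite^'a::finite \<Rightarrow> real^'a)"
    by (rule linearI) (simp_all add: aggr_def vec_eq_iff sum.distrib sum_distrib_left)
  then show ?thesis using linear_conv_bounded_linear by blast
qed

lemma aggr_field:
  assumes "transpose W = W"
  shows "aggr (net_imitation_field W f x) $ i =
    (\<Sum>j\<in>UNIV. (f (aggr x) $ j $ i - f (aggr x) $ i $ j) * (\<Sum>h\<in>UNIV. \<Sum>k\<in>UNIV. x$i$h * W$h$k * x$j$k))"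
proof -
  let ?F = "f (aggr x)"
  have sym: "\<And>h k. W$k$h = W$h$k" using assms by (metis transpose_def vec_lambda_beta)
  have "aggr (net_imitation_field W f x) $ i =
     (\<Sum>h\<in>UNIV. \<Sum>j\<in>UNIV. \<Sum>k\<in>UNIV. x $ j $ h * W $ h $ k * x $ i $ k * ?F $ j $ i
      - x $ i $ h * W $ h $ k * x $ j $ k * ?F $ i $ j)"
    by (simp add: aggr_def net_imitation_field_def)
  also have "\<dots> = (\<Sum>j\<in>UNIV. (\<Sum>h\<in>UNIV. \<Sum>k\<in>UNIV. x $ j $ h * W $ h $ k * x $ i $ k) * ?F $ j $ i
      - (\<Sum>h\<in>UNIV. \<Sum>k\<in>UNIV. x $ i $ h * W $ h $ k * x $ j $ k) * ?F $ i $ j)"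
    by (subst sum.swap) (simp add: sum_subtractf sum_distrib_right)
  moreover have swp: "\<And>j. (\<Sum>h\<in>UNIV. \<Sum>k\<in>UNIV. x $ j $ h * W $ h $ k * x $ i $ k) = (\<Sum>h\<in>UNIV. \<Sum>k\<in>UNIV. x $ i $ h * W $ h $ k * x $ j $ k)"
  proof -
    fix j
    have "(\<Sum>h\<in>UNIV. \<Sum>k\<in>UNIV. x $ j $ h * W $ h $ k * x $ i $ k) = (\<Sum>k\<in>UNIV. \<Sum>h\<in>UNIV. x $ j $ h * W $ h $ k * x $ i $ k)"
      by (rule sum.swap)
    also have "\<dots> = (\<Sum>k\<in>UNIV. \<Sum>h\<in>UNIV. x $ i $ k * W $ k $ h * x $ j $ h)"
      by (simp add: sym mult.commute mult.left_commute)
    finally show "?thesis j" .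
  qed
  ultimately show ?thesis by (simp add: algebra_simps)
qed

lemma term_bound:
  fixes y w :: "real^'a::finite" and F G :: "real^'a^'a" and P Wm L B :: real
  assumes hsym: "0 < w$i \<Longrightarrow> 0 < w$j \<Longrightarrow> G$i$j = G$j$i"
    and hL: "\<And>a b. \<bar>F$a$b - G$a$b\<bar> \<le> L * norm (y - w)"
    and hB: "\<And>a b. \<bar>F$a$b\<bar> \<le> B"
    and P0: "0 \<le> P" and PW: "P \<le> Wm * y$i * y$j" and Wm: "0 \<le> Wm" and L: "0 \<le> L"
    and y: "\<And>a. 0 \<le> y$a" "\<And>a. y$a \<le> 1" and w: "\<And>a. 0 \<le> w$a"
  shows "\<bar>(F$j$i - F$i$j) * P\<bar> \<le> Wm * (2*L + 2*B) * norm (y - w)"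
proof -
  let ?n = "norm (y - w)"
  have n0: "0 \<le> ?n" by simp
  have B0: "0 \<le> B" using hB[of i i] by linarith
  have dB: "\<bar>F$j$i - F$i$j\<bar> \<le> 2*B" using hB[of j i] hB[of i j] by linarith
  have aP: "\<bar>(F$j$i - F$i$j) * P\<bar> = \<bar>F$j$i - F$i$j\<bar> * P" using P0 by (simp add: abs_mult)
  show ?thesis
  proof (cases "0 < w$i \<and> 0 < w$j")
    case True
    have "\<bar>F$j$i - F$i$j\<bar> \<le> 2*L*?n"
      using hsym True hL[of j i] hL[of i j] by (simp add: abs_le_iff) linarith?
    moreover have "P \<le> Wm"
    proof -
      have "y$i * y$j \<le> 1" using y by (simp add: mult_le_one)
      then have "Wm * (y$i * y$j) \<le> Wm" using Wm mult_left_le by blast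
      then show ?thesis using PW by (simp add: mult.assoc)
    qed
    ultimately have "\<bar>F$j$i - F$i$j\<bar> * P \<le> 2*L*?n * Wm"
      using P0 by (meson abs_ge_zero mult_mono order_trans)
    moreover have "0 \<le> Wm * 2 * B * ?n" using Wm B0 n0 by simp
    ultimately show ?thesis using aP by (simp add: algebra_simps)
  next
    case False
    have "P \<le> Wm * ?n"
    proof (cases "0 < w$i")
      case True
      then have z: "w$j = 0" using False w[of j] by auto
      have "y$j \<le> ?n" using component_le_norm_cart[of "y - w" j] z by simp
      moreover have "y$i * y$j \<le> y$j" using y by (simp add: mult_left_le_one_le)
      ultimately have "Wm * (y$i * y$j) \<le> Wm * ?n" using Wm by (meson mult_left_mono order_trans)
      then show ?thesis using PW by (simp add: mult.assoc)
    next
      case f2: False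
      then have z: "w$i = 0" using w[of i] by auto
      have "y$i \<le> ?n" using component_le_norm_cart[of "y - w" i] z by simp
      moreover have "y$i * y$j \<le> y$i" using y by (simp add: mult_right_le_one_le)
      ultimately have "Wm * (y$i * y$j) \<le> Wm * ?n" using Wm by (meson mult_left_mono order_trans)
      then show ?thesis using PW by (simp add: mult.assoc)
    qed
    with dB have "\<bar>F$j$i - F$i$j\<bar> * P \<le> 2*B * (Wm * ?n)"
      using P0 by (meson abs_ge_zero mult_mono order_trans)
    moreover have "0 \<le> Wm * 2 * L * ?n" using Wm L n0 by simp
    ultimately show ?thesis using aP by (simp add: algebra_simps)
  qed
qed

theorem proposition2:
  fixes r :: "'a::finite \<Rightarrow> real^'a \<Rightarrow> real"
    and eta :: "real^'h::finite"
    and W :: "real^'h^'h"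
    and f :: "real^'a \<Rightarrow> real^'a^'a"
    and x :: "real \<Rightarrow> real^'h^'a"
  assumes net: "community_network eta W"
    and conn: "irreducible_mat W"
    and undir: "undirected W"
    and imit: "imitation_mechanism f"
    and A1: "assumption1 r f"
    and sol_states: "\<forall>t\<ge>0. x t \<in> sys_states eta"
    and sol_ode: "\<forall>t\<ge>0. (x has_vector_derivative net_imitation_field W f (x t)) (at t within {0..})"
    and init: "x 0 \<in> X_bullet r eta"
  shows "(\<forall>t\<ge>0. aggr (x t) = aggr (x 0)) \<and> (\<forall>t\<ge>0. x t \<in> X_bullet r eta)"
proof -
  let ?Y = "\<lambda>t. aggr (x t)"
  define y0 where "y0 = aggr (x 0)"
  have y0B: "y0 \<in> Y_bullet r" using init by (simp add: X_bullet_def y0_def)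
  hence y0S: "y0 \<in> pop_simplex" by (simp add: Y_bullet_def)
  have etasum: "(\<Sum>h\<in>UNIV. eta $ h) = 1" and Wnn: "\<And>h k. 0 \<le> W$h$k"
    using net by (auto simp: community_network_def)
  have simp_of: "aggr z \<in> pop_simplex" if "z \<in> sys_states eta" for z
  proof -
    have "(\<Sum>i\<in>UNIV. \<Sum>h\<in>UNIV. z$i$h) = (\<Sum>h\<in>UNIV. \<Sum>i\<in>UNIV. z$i$h)" by (rule sum.swap)
    also have "\<dots> = 1" using that etasum by (simp add: sys_states_def)
    finally show ?thesis using that by (auto simp: pop_simplex_def aggr_def sys_states_def intro!: sum_nonneg)
  qed
  have nsimp: "norm y \<le> 1" if "y \<in> pop_simplex" for y :: "real^'a"
    using norm_le_l1_cart[of y] that by (simp add: pop_simplex_def)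
  obtain L where Lf: "L-lipschitz_on pop_simplex f" using imit by (auto simp: imitation_mechanism_def)
  hence L0: "0 \<le> L" and Ld: "\<And>u v. u \<in> pop_simplex \<Longrightarrow> v \<in> pop_simplex \<Longrightarrow> dist (f u) (f v) \<le> L * dist u v"
    by (auto simp: lipschitz_on_def)
  define B where "B = norm (f y0) + 2 * L"
  define Wm where "Wm = (\<Sum>h\<in>UNIV. \<Sum>k\<in>UNIV. W$h$k)"
  have Wle: "W$h$k \<le> Wm" for h k
  proof -
    have "W$h$k \<le> (\<Sum>k\<in>UNIV. W$h$k)" by (rule member_le_sum) (auto simp: Wnn)
    also have "\<dots> \<le> Wm" unfolding Wm_def by (rule member_le_sum) (auto intro!: sum_nonneg simp: Wnn)
    finally show ?thesis .
  qed
  have Wm0: "0 \<le> Wm" using Wle[of h h for h] Wnn by (meson order_trans)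
  have entry: "\<bar>M$a$b\<bar> \<le> norm M" for M :: "real^'a^'a" and a b
    using component_le_norm_cart[of "M$a" b] Finite_Cartesian_Product.norm_nth_le[of M a] by linarith
  define K where "K = Wm * (2*L + 2*B)"
  define c where "c = 2 * real (CARD('a)) * real (CARD('a)) * K"
  have deriv_bound: "norm (aggr (net_imitation_field W f z)) \<le> real (CARD('a)) * real (CARD('a)) * K * norm (aggr z - y0)"
    if zS: "z \<in> sys_states eta" for z
  proof -
    let ?y = "aggr z"
    have yS: "?y \<in> pop_simplex" using simp_of zS .
    have ynn: "\<And>a. 0 \<le> ?y$a" using yS by (simp add: pop_simplex_def)
    have yle: "\<And>a. ?y$a \<le> 1" using nsimp[OF yS] component_le_norm_cart[of ?y] by (meson abs_ge_self order_trans)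
    have y0nn: "\<And>a. 0 \<le> y0$a" using y0S by (simp add: pop_simplex_def)
    have hL: "\<bar>f ?y$a$b - f y0$a$b\<bar> \<le> L * norm (?y - y0)" for a b
      using entry[of "f ?y - f y0" a b] Ld[OF yS y0S] by (simp add: dist_norm)
    have hB: "\<bar>f ?y$a$b\<bar> \<le> B" for a b
    proof -
      have "norm (?y - y0) \<le> 2" using nsimp[OF yS] nsimp[OF y0S] norm_triangle_ineq4[of ?y y0] by linarith
      hence "L * norm (?y - y0) \<le> 2 * L" using L0 by (metis mult.commute mult_left_mono)
      moreover have "norm (f ?y) \<le> norm (f y0) + dist (f ?y) (f y0)"
        by (metis dist_norm norm_triangle_sub add.commute)
      ultimately show ?thesis using entry[of "f ?y" a b] Ld[OF yS y0S] unfolding B_def dist_norm by linarith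
    qed
    have hsym: "f y0$i$j = f y0$j$i" if "0 < y0$i" "0 < y0$j" for i j
    proof -
      have "r i y0 = r j y0" using y0B that unfolding Y_bullet_def by blast
      moreover have "sgn (f y0 $ i $ j - f y0 $ j $ i) = sgn (r j y0 - r i y0)"
        using A1 y0S unfolding assumption1_def by blast
      ultimately have "sgn (f y0 $ i $ j - f y0 $ j $ i) = 0" by simp
      thus ?thesis by (simp add: sgn_eq_0_iff)
    qed
    have znn: "\<And>i h. 0 \<le> z$i$h" using zS by (simp add: sys_states_def)
    have comp: "\<bar>aggr (net_imitation_field W f z) $ i\<bar> \<le> real (CARD('a)) * K * norm (?y - y0)" for i
    proof -
      have "\<bar>aggr (net_imitation_field W f z) $ i\<bar> \<le> (\<Sum>j\<in>UNIV. \<bar>(f ?y $ j $ i - f ?y $ i $ j) * (\<Sum>h\<in>UNIV. \<Sum>k\<in>UNIV. z$i$h * W$h$k * z$j$k)\<bar>)"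
        unfolding aggr_field[OF undir[unfolded undirected_def]] by (rule sum_abs)
      also have "\<dots> \<le> (\<Sum>j::'a\<in>UNIV. K * norm (?y - y0))"
      proof (intro sum_mono)
        fix j
        let ?P = "\<Sum>h\<in>UNIV. \<Sum>k\<in>UNIV. z$i$h * W$h$k * z$j$k"
        have P0: "0 \<le> ?P" by (intro sum_nonneg) (simp add: znn Wnn)
        have "?P \<le> (\<Sum>h\<in>UNIV. \<Sum>k\<in>UNIV. z$i$h * Wm * z$j$k)"
          by (rule sum_mono, rule sum_mono, rule mult_right_mono, rule mult_left_mono) (simp_all add: znn Wle)
        also have "\<dots> = (\<Sum>h\<in>UNIV. (Wm * z$i$h) * (\<Sum>k\<in>UNIV. z$j$k))"
          by (simp add: sum_distrib_left mult_ac)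
        also have "\<dots> = (\<Sum>h\<in>UNIV. Wm * z$i$h) * (\<Sum>k\<in>UNIV. z$j$k)"
          by (rule sum_distrib_right[symmetric])
        also have "\<dots> = Wm * ?y$i * ?y$j"
          by (simp add: aggr_def sum_distrib_left[symmetric])
        finally have PW: "?P \<le> Wm * ?y$i * ?y$j" .
        show "\<bar>(f ?y $ j $ i - f ?y $ i $ j) * ?P\<bar> \<le> K * norm (?y - y0)"
          unfolding K_def
          by (rule term_bound[where G="f y0", OF hsym hL hB P0 PW Wm0 L0 ynn yle y0nn])
      qed
      finally show ?thesis by simp
    qed
    have "norm (aggr (net_imitation_field W f z)) \<le> (\<Sum>i\<in>UNIV. \<bar>aggr (net_imitation_field W f z) $ i\<bar>)"
      by (rule norm_le_l1_cart)
    also have "\<dots> \<le> (\<Sum>i::'a\<in>UNIV. real (CARD('a)) * K * norm (?y - y0))"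
      by (rule sum_mono) (rule comp)
    finally show ?thesis by simp
  qed
  define V where "V t = inner (?Y t - y0) (?Y t - y0)" for t
  define G where "G t = exp (- c * t) * V t" for t
  have dY: "(?Y has_vector_derivative aggr (net_imitation_field W f (x t))) (at t within {0..})" if "t \<ge> 0" for t
    using bounded_linear.has_vector_derivative[OF aggr_linear sol_ode[rule_format, OF that]] .
  have dG: "(G has_real_derivative (exp (- c * t) * (2 * inner (?Y t - y0) (aggr (net_imitation_field W f (x t)))) - c * exp (- c * t) * V t)) (at t within {0..})"
    if "t \<ge> 0" for t
  proof -
    have d1: "((\<lambda>s. ?Y s - y0) has_vector_derivative aggr (net_imitation_field W f (x t))) (at t within {0..})"
      using dY[OF that] by (simp add: has_vector_derivative_diff_const)
    have "(V has_vector_derivative (inner (?Y t - y0) (aggr (net_imitation_field W f (x t))) + inner (aggr (net_imitation_field W f (x t))) (?Y t - y0))) (at t within {0..})"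
      unfolding V_def by (rule bounded_bilinear.has_vector_derivative[OF bounded_bilinear_inner d1 d1])
    hence dV: "(V has_real_derivative 2 * inner (?Y t - y0) (aggr (net_imitation_field W f (x t)))) (at t within {0..})"
      by (simp add: has_real_derivative_iff_has_vector_derivative inner_commute)
    have dE: "((\<lambda>s. exp (- c * s)) has_real_derivative exp (- c * t) * (- c)) (at t within {0..})"
      by (auto intro!: derivative_eq_intros)
    show ?thesis unfolding G_def
      by (rule DERIV_cong[OF DERIV_mult[OF dE dV]]) (simp add: algebra_simps)
  qed
  have Gnonpos: "exp (- c * t) * (2 * inner (?Y t - y0) (aggr (net_imitation_field W f (x t)))) - c * exp (- c * t) * V t \<le> 0"
    if "t \<ge> 0" for t
  proof -
    have "2 * inner (?Y t - y0) (aggr (net_imitation_field W f (x t))) \<le> 2 * (norm (?Y t - y0) * norm (aggr (net_imitation_field W f (x t))))"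
      using norm_cauchy_schwarz by simp
    also have "\<dots> \<le> 2 * (norm (?Y t - y0) * (real (CARD('a)) * real (CARD('a)) * K * norm (?Y t - y0)))"
      using deriv_bound[OF sol_states[rule_format, OF that]] by (simp add: mult_left_mono)
    also have "\<dots> = c * V t" by (simp add: c_def V_def power2_norm_eq_inner[symmetric] power2_eq_square)
    finally have "2 * inner (?Y t - y0) (aggr (net_imitation_field W f (x t))) \<le> c * V t" .
    then have "exp (- c * t) * (2 * inner (?Y t - y0) (aggr (net_imitation_field W f (x t))) - c * V t) \<le> 0"
      by (intro mult_nonneg_nonpos) auto
    then show ?thesis by (simp add: right_diff_distrib mult.assoc mult.left_commute)
  qed
  have const: "?Y t = y0" if t0: "t \<ge> 0" for t
  proof -
    have cont: "continuous_on {0..} G"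
      by (rule has_derivative_continuous_on, rule has_field_derivative_imp_has_derivative, rule dG) auto
    have "G t \<le> G 0"
    proof (rule DERIV_nonpos_imp_decreasing_open[OF t0])
      fix s assume s: "0 < s" "s < t"
      have "at s within {0..} = at s" by (rule at_within_interior) (use s in simp)
      moreover have "s \<ge> 0" using s by simp
      ultimately show "\<exists>y. (G has_real_derivative y) (at s) \<and> y \<le> 0"
        using dG[of s] Gnonpos[of s] by metis
    next
      show "continuous_on {0..t} G" using cont by (rule continuous_on_subset) auto
    qed
    moreover have "G 0 = 0" by (simp add: G_def V_def y0_def)
    moreover have "V t \<ge> 0" by (simp add: V_def)
    ultimately have "V t = 0" unfolding G_def by (smt (verit) exp_gt_zero mult_pos_pos)
    thus ?thesis by (simp add: V_def)
  qed
  show ?thesis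
  proof
    show "\<forall>t\<ge>0. aggr (x t) = aggr (x 0)" using const unfolding y0_def by blast
  next
    show "\<forall>t\<ge>0. x t \<in> X_bullet r eta" using const sol_states y0B unfolding X_bullet_def by auto
  qed
qed

end
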